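(* Let $G$ be a graph and let $\mathcal{P} = \{V_1,\dots,V_k\}$ be a partition of $V(G)$ such that $|V_i| > 2\Delta(G)$ for all $i \in [k-1]$. Then for any $v_k, v_k' \in V_k$ there exists an independent transversal $T$ of $\{V_1,\dots,V_{k-1}\}$ such that both $T \cup \{v_k\}$ and $T\cup\{v_k'\}$ are independent transversals of $\mathcal{P}$.
   Context: Given a graph $G$ and a collection $\mathcal{Q}=\{W_1,\dots,W_m\}$ of pairwise disjoint subsets of $V(G)$: a transversal of $\mathcal{Q}$ is a set $S \subseteq \bigcup_i W_i$ with $|S \cap W_i| = 1$ for every $i\in[m]$; an independent transversal of $\mathcal{Q}$ is a transversal of $\mathcal{Q}$ that is an independent set in $G$. $\Delta(G)$ is the maximum degree of $G$. *)

theory Defs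
  imports Main
begin

definition graph :: "'a set \<Rightarrow> ('a \<Rightarrow> 'a \<Rightarrow> bool) \<Rightarrow> bool" where
  "graph V E \<longleftrightarrow> finite V \<and> (\<forall>u v. E u v \<longrightarrow> u \<in> V \<and> v \<in> V)
     \<and> (\<forall>u v. E u v \<longrightarrow> E v u) \<and> (\<forall>v. \<not> E v v)"

definition degree :: "'a set \<Rightarrow> ('a \<Rightarrow> 'a \<Rightarrow> bool) \<Rightarrow> 'a \<Rightarrow> nat" where
  "degree V E v = card {u \<in> V. E v u}"

definition max_degree :: "'a set \<Rightarrow> ('a \<Rightarrow> 'a \<Rightarrow> bool) \<Rightarrow> nat" where
  "max_degree V E = Max (insert 0 (degree V E ` V))"

definition independent :: "('a \<Rightarrow> 'a \<Rightarrow> bool) \<Rightarrow> 'a set \<Rightarrow> bool" where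
  "independent E S \<longleftrightarrow> (\<forall>u\<in>S. \<forall>v\<in>S. \<not> E u v)"

definition transversal :: "(nat \<Rightarrow> 'a set) \<Rightarrow> nat set \<Rightarrow> 'a set \<Rightarrow> bool" where
  "transversal W I S \<longleftrightarrow> S \<subseteq> (\<Union>i\<in>I. W i) \<and> (\<forall>i\<in>I. card (S \<inter> W i) = 1)"

definition indep_transversal ::
  "('a \<Rightarrow> 'a \<Rightarrow> bool) \<Rightarrow> (nat \<Rightarrow> 'a set) \<Rightarrow> nat set \<Rightarrow> 'a set \<Rightarrow> bool" where
  "indep_transversal E W I S \<longleftrightarrow> transversal W I S \<and> independent E S"

definition is_partition :: "'a set \<Rightarrow> (nat \<Rightarrow> 'a set) \<Rightarrow> nat \<Rightarrow> bool" where
  "is_partition V P k \<longleftrightarrow> (\<Union>i\<in>{1..k}. P i) = V \<and> (\<forall>i\<in>{1..k}. P i \<noteq> {})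
     \<and> (\<forall>i\<in>{1..k}. \<forall>j\<in>{1..k}. i \<noteq> j \<longrightarrow> P i \<inter> P j = {})"

end

theory Submission imports Defs begin

definition pdom :: "nat list \<Rightarrow> nat list \<Rightarrow> bool" where
  "pdom v w \<longleftrightarrow> (\<exists>i. i < length v \<and> i < length w \<and> (\<forall>l<i. v!l \<le> w!l) \<and> v!i < w!i)"

lemma pdom_mono:
  assumes "pdom v u" "length u \<le> length w" "\<forall>l<length u. u!l \<le> w!l"
  shows "pdom v w"
proof -
  obtain i where i: "i < length v" "i < length u" "\<forall>l<i. v!l \<le> u!l" "v!i < u!i"
    using assms(1) unfolding pdom_def by blast
  have "i < length w" using i(2) assms(2) by simp
  moreover have "\<forall>l<i. v!l \<le> w!l" using i assms(3) by (meson le_trans less_trans)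
  moreover have "v!i < w!i" using i assms(3) by (meson less_le_trans)
  ultimately show ?thesis unfolding pdom_def using i(1) by blast
qed

lemma pdom_append: "pdom v w \<Longrightarrow> pdom (v@p) (w@q)"
  unfolding pdom_def by (auto simp: nth_append)

lemma pdom_lex:
  assumes "pdom v w" "length v = length w"
  shows "(v,w) \<in> lex less_than"
proof -
  obtain i where i: "i < length v" "i < length w" "\<forall>l<i. v!l \<le> w!l" "v!i < w!i"
    using assms(1) unfolding pdom_def by blast
  define P where "P = (\<lambda>l. l < length v \<and> v!l \<noteq> w!l)"
  have Pi: "P i" using i unfolding P_def by simp
  define l where "l = (LEAST l. P l)"
  have Pl: "P l" unfolding l_def using LeastI[of P i] Pi by simp
  have li: "l \<le> i" unfolding l_def using Least_le[of P i] Pi by simp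
  have eq: "\<forall>l'<l. v!l' = w!l'"
    using not_less_Least[of _ P] li i(1) unfolding P_def l_def
    by (metis le_less_trans less_trans)
  have lt: "v!l < w!l"
  proof (cases "l = i")
    case True then show ?thesis using i by simp
  next
    case False then have "l < i" using li by simp
    then have "v!l \<le> w!l" using i(3) by simp
    then show ?thesis using Pl unfolding P_def by simp
  qed
  have ll: "l < length v" using Pl P_def by simp
  have tk: "take l v = take l w"
    by (rule nth_equalityI) (use eq ll assms(2) in auto)
  have "v = take l v @ v!l # drop (Suc l) v" using ll by (rule id_take_nth_drop)
  moreover have "w = take l v @ w!l # drop (Suc l) w" using ll assms(2) tk id_take_nth_drop by metis
  ultimately show ?thesis unfolding lex_conv using assms(2) lt by blast
qed

locale hx =
  fixes E :: "'a \<Rightarrow> 'a \<Rightarrow> bool" and W :: "nat \<Rightarrow> 'a set" and I0 :: "nat set" and a :: nat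
  assumes sym: "\<And>u v. E u v \<Longrightarrow> E v u"
    and irr: "\<And>v. \<not> E v v"
    and finI: "finite I0"
    and aI: "a \<notin> I0"
    and finW: "\<And>i. i \<in> insert a I0 \<Longrightarrow> finite (W i)"
    and disj: "\<And>i j. i \<in> insert a I0 \<Longrightarrow> j \<in> insert a I0 \<Longrightarrow> i \<noteq> j \<Longrightarrow> W i \<inter> W j = {}"
    and C: "\<And>S D. S \<subseteq> insert a I0 \<Longrightarrow> S \<noteq> {} \<Longrightarrow> finite D \<Longrightarrow> card D + 2 \<le> 2 * card S
              \<Longrightarrow> \<exists>x\<in>(\<Union>i\<in>S. W i). \<forall>d\<in>D. \<not> E x d"
begin

definition SS :: "'a list \<Rightarrow> nat set" where
  "SS ys = insert a {j\<in>I0. \<exists>y\<in>set ys. y \<in> W j}"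

definition valid :: "'a set \<Rightarrow> 'a list \<Rightarrow> 'a list \<Rightarrow> bool" where
  "valid M xs ys \<longleftrightarrow> indep_transversal E W I0 M \<and> length xs = length ys \<and>
     (\<forall>i<length ys. ys!i \<in> M \<and> E (xs!i) (ys!i) \<and> xs!i \<in> (\<Union>j\<in>SS (take i ys). W j) \<and>
        (\<forall>l<i. \<not> E (xs!i) (xs!l) \<and> \<not> E (xs!i) (ys!l)))"

definition vec :: "'a set \<Rightarrow> 'a list \<Rightarrow> nat list" where
  "vec M xs = map (\<lambda>x. card {y\<in>M. E x y}) xs"

lemma valid_nth:
  "valid M xs ys \<Longrightarrow> i < length ys \<Longrightarrow> ys!i \<in> M \<and> E (xs!i) (ys!i) \<and> xs!i \<in> (\<Union>j\<in>SS (take i ys). W j) \<and>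
        (\<forall>l<i. \<not> E (xs!i) (xs!l) \<and> \<not> E (xs!i) (ys!l))"
  unfolding valid_def by blast

lemma valid_prefix:
  assumes "valid M xs ys" "j \<le> length ys" "indep_transversal E W I0 M'" "\<forall>l<j. ys!l \<in> M'"
  shows "valid M' (take j xs) (take j ys)"
  using assms unfolding valid_def by (auto simp: min_def)

lemma valid_snoc:
  assumes v: "valid M xs ys" and y: "y \<in> M" "E z y" and z: "z \<in> (\<Union>j\<in>SS ys. W j)"
    and nz: "\<forall>d\<in>set xs \<union> set ys. \<not> E z d"
  shows "valid M (xs@[z]) (ys@[y])"
proof -
  have IT: "indep_transversal E W I0 M" using v valid_def by blast
  have len: "length xs = length ys" using v valid_def by blast
  have "\<forall>i<length (ys @ [y]). (ys @ [y]) ! i \<in> M \<and> E ((xs @ [z]) ! i) ((ys @ [y]) ! i) \<and>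
       (xs @ [z]) ! i \<in> (\<Union>j\<in>SS (take i (ys @ [y])). W j) \<and>
       (\<forall>l<i. \<not> E ((xs @ [z]) ! i) ((xs @ [z]) ! l) \<and> \<not> E ((xs @ [z]) ! i) ((ys @ [y]) ! l))"
  proof (intro allI impI)
    fix i assume i: "i < length (ys @ [y])"
    show "(ys @ [y]) ! i \<in> M \<and> E ((xs @ [z]) ! i) ((ys @ [y]) ! i) \<and>
       (xs @ [z]) ! i \<in> (\<Union>j\<in>SS (take i (ys @ [y])). W j) \<and>
       (\<forall>l<i. \<not> E ((xs @ [z]) ! i) ((xs @ [z]) ! l) \<and> \<not> E ((xs @ [z]) ! i) ((ys @ [y]) ! l))"
    proof (cases "i < length ys")
      case True
      then show ?thesis using valid_nth[OF v True] len by (auto simp: nth_append)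
    next
      case False
      then have ii: "i = length ys" using i by simp
      have "\<forall>l<i. \<not> E z (xs ! l) \<and> \<not> E z (ys ! l)" using nz ii len by auto
      then show ?thesis using ii len y z by (auto simp: nth_append)
    qed
  qed
  then show ?thesis unfolding valid_def using IT len by simp
qed

lemma valid_distinct:
  assumes v: "valid M xs ys" shows "distinct ys"
  unfolding distinct_conv_nth
proof (intro allI impI)
  fix i j assume ij: "i < length ys" "j < length ys" "i \<noteq> j"
  show "ys!i \<noteq> ys!j"
  proof (cases "j < i")
    case True then show ?thesis using valid_nth[OF v ij(1)] by metis
  next
    case False then have "i < j" using ij by simp
    then show ?thesis using valid_nth[OF v ij(2)] by metis
  qed
qed

lemma IT_sub: "indep_transversal E W I0 M \<Longrightarrow> M \<subseteq> (\<Union>i\<in>insert a I0. W i)"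
  unfolding indep_transversal_def transversal_def by auto

lemma fin_full: "finite (\<Union>i\<in>insert a I0. W i)"
  using finI finW by blast

lemma IT_fin: "indep_transversal E W I0 M \<Longrightarrow> finite M"
  using IT_sub fin_full finite_subset by blast

lemma card_bound:
  assumes v: "valid M xs ys"
  shows "card (set xs \<union> set ys) + 2 \<le> 2 * card (SS ys)" "length ys < card (insert a I0)"
proof -
  define Cl where "Cl = {j\<in>I0. \<exists>y\<in>set ys. y \<in> W j}"
  have IT: "indep_transversal E W I0 M" using v valid_def by blast
  have finCl: "finite Cl" using finI Cl_def by simp
  have ysM: "set ys \<subseteq> M" using v unfolding valid_def by (auto simp: in_set_conv_nth)
  have sub: "set ys \<subseteq> (\<Union>j\<in>Cl. M \<inter> W j)"
  proof
    fix y assume y: "y \<in> set ys"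
    then have "y \<in> M" using ysM by blast
    then obtain j where "j \<in> I0" "y \<in> W j" using IT unfolding indep_transversal_def transversal_def by blast
    then show "y \<in> (\<Union>j\<in>Cl. M \<inter> W j)" using y \<open>y \<in> M\<close> Cl_def by blast
  qed
  have "card (set ys) \<le> card (\<Union>j\<in>Cl. M \<inter> W j)"
    using sub IT_fin[OF IT] by (intro card_mono) auto
  also have "\<dots> \<le> (\<Sum>j\<in>Cl. card (M \<inter> W j))" using finCl by (rule card_UN_le)
  also have "\<dots> = (\<Sum>j\<in>Cl. 1)"
    using IT unfolding indep_transversal_def transversal_def Cl_def by (intro sum.cong) auto
  finally have c1: "card (set ys) \<le> card Cl" by simp
  have len: "length xs = length ys" using v valid_def by blast
  have "card (set xs) \<le> card (set ys)"
    using card_length[of xs] len distinct_card[OF valid_distinct[OF v]] by simp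
  then have "card (set xs \<union> set ys) \<le> 2 * card Cl" using c1 card_Un_le[of "set xs" "set ys"] by simp
  moreover have "card (SS ys) = Suc (card Cl)" unfolding SS_def Cl_def[symmetric]
    using finCl aI Cl_def by simp
  ultimately show "card (set xs \<union> set ys) + 2 \<le> 2 * card (SS ys)" by simp
  have "card Cl \<le> card I0" using finI Cl_def by (intro card_mono) auto
  then show "length ys < card (insert a I0)"
    using c1 distinct_card[OF valid_distinct[OF v]] finI aI by simp
qed

lemma SS_sub: "SS ys \<subseteq> insert a I0"
  unfolding SS_def by auto

lemma add_a:
  assumes IT: "indep_transversal E W I0 M" and z: "z \<in> W a" and nz: "\<forall>y\<in>M. \<not> E z y"
  shows "indep_transversal E W (insert a I0) (insert z M)"
proof -
  have Msub: "M \<subseteq> (\<Union>i\<in>I0. W i)" using IT unfolding indep_transversal_def transversal_def by blast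
  have Ma: "M \<inter> W a = {}" using Msub disj aI by blast
  have tr: "transversal W (insert a I0) (insert z M)"
    unfolding transversal_def
  proof (intro conjI ballI)
    show "insert z M \<subseteq> (\<Union>i\<in>insert a I0. W i)" using Msub z by blast
    fix i assume i: "i \<in> insert a I0"
    show "card (insert z M \<inter> W i) = 1"
    proof (cases "i = a")
      case True
      then have "insert z M \<inter> W i = {z}" using Ma z by blast
      then show ?thesis by simp
    next
      case False
      then have "z \<notin> W i" using disj[of a i] i z by blast
      then have "insert z M \<inter> W i = M \<inter> W i" by blast
      then show ?thesis using IT i False unfolding indep_transversal_def transversal_def by auto
    qed
  qed
  have "independent E (insert z M)"
    using IT nz irr sym unfolding indep_transversal_def independent_def by blast
  then show ?thesis using tr indep_transversal_def by blast
qed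

lemma swap_IT:
  assumes IT: "indep_transversal E W I0 M" and yM: "y \<in> M" and yc: "y \<in> W c" and c: "c \<in> I0"
    and z: "z \<in> W c" and nz: "\<forall>y\<in>M. \<not> E z y"
  shows "indep_transversal E W I0 (insert z (M - {y}))"
proof -
  have Msub: "M \<subseteq> (\<Union>i\<in>I0. W i)" using IT unfolding indep_transversal_def transversal_def by blast
  have Mc: "M \<inter> W c = {y}"
  proof -
    have "card (M \<inter> W c) = 1" using IT c unfolding indep_transversal_def transversal_def by blast
    then obtain u where "M \<inter> W c = {u}" using card_1_singletonE by blast
    then show ?thesis using yM yc by (metis IntI singletonD)
  qed
  have tr: "transversal W I0 (insert z (M - {y}))"
    unfolding transversal_def
  proof (intro conjI ballI)
    show "insert z (M - {y}) \<subseteq> (\<Union>i\<in>I0. W i)" using Msub z c by blast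
    fix i assume i: "i \<in> I0"
    show "card (insert z (M - {y}) \<inter> W i) = 1"
    proof (cases "i = c")
      case True
      then have "insert z (M - {y}) \<inter> W i = {z}" using Mc z by blast
      then show ?thesis by simp
    next
      case False
      then have "z \<notin> W i" "y \<notin> W i" using disj[of c i] i z yc c by blast+
      then have "insert z (M - {y}) \<inter> W i = M \<inter> W i" by blast
      then show ?thesis using IT i unfolding indep_transversal_def transversal_def by auto
    qed
  qed
  have "independent E (insert z (M - {y}))"
    using IT nz irr sym unfolding indep_transversal_def independent_def by blast
  then show ?thesis using tr indep_transversal_def by blast
qed

end

context hx begin

lemma R:
  assumes "valid M xs ys" "z \<in> (\<Union>j\<in>SS ys. W j)" "\<forall>d\<in>set xs \<union> set ys. \<not> E z d" "\<forall>y\<in>M. \<not> E z y"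
  shows "(\<exists>T. indep_transversal E W (insert a I0) T) \<or> (\<exists>M2 xs2 ys2. valid M2 xs2 ys2 \<and> pdom (vec M2 xs2) (vec M xs))"
  using assms
proof (induction "length ys" arbitrary: M xs ys z rule: less_induct)
  case less
  note v = less.prems(1) and zS = less.prems(2) and nz = less.prems(3) and nM = less.prems(4)
  have IT: "indep_transversal E W I0 M" using v valid_def by blast
  have len: "length xs = length ys" using v valid_def by blast
  have finM: "finite M" using IT_fin[OF IT] .
  obtain c where c: "c \<in> SS ys" "z \<in> W c" using zS by blast
  show ?case
  proof (cases "c = a")
    case True
    then show ?thesis using add_a[OF IT] c nM by blast
  next
    case False
    then obtain y where y: "c \<in> I0" "y \<in> set ys" "y \<in> W c" using c unfolding SS_def by blast
    then obtain j where j: "j < length ys" "ys!j = y" by (auto simp: in_set_conv_nth)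
    note vj = valid_nth[OF v j(1)]
    define M' where "M' = insert z (M - {y})"
    have IT': "indep_transversal E W I0 M'" unfolding M'_def
      using swap_IT[OF IT _ y(3) y(1) c(2) nM] vj j by simp
    have zx: "\<And>l. l < length ys \<Longrightarrow> \<not> E (xs!l) z"
      using nz len sym by (metis UnI1 nth_mem)
    have zy: "z \<noteq> y" using zx[OF j(1)] vj j sym by metis
    have sub: "\<And>l. l < length ys \<Longrightarrow> {u\<in>M'. E (xs!l) u} \<subseteq> {u\<in>M. E (xs!l) u}"
      using zx unfolding M'_def by auto
    have le: "\<forall>l<length ys. card {u\<in>M'. E (xs!l) u} \<le> card {u\<in>M. E (xs!l) u}"
      using sub finM by (intro allI impI card_mono) auto
    have subj: "{u\<in>M'. E (xs!j) u} \<subset> {u\<in>M. E (xs!j) u}"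
    proof -
      have "y \<in> {u\<in>M. E (xs!j) u}" using vj j by simp
      moreover have "y \<notin> {u\<in>M'. E (xs!j) u}" using zy unfolding M'_def by simp
      ultimately show ?thesis using sub[OF j(1)] by blast
    qed
    have ltj: "card {u\<in>M'. E (xs!j) u} < card {u\<in>M. E (xs!j) u}"
      using subj finM by (intro psubset_card_mono) auto
    have ysM': "\<forall>l<j. ys!l \<in> M'"
    proof (intro allI impI)
      fix l assume l: "l < j"
      have "ys!l \<in> M" using valid_nth[OF v] l j by simp
      moreover have "ys!l \<noteq> y" using valid_distinct[OF v] l j by (metis nat_neq_iff nth_eq_iff_index_eq less_trans)
      ultimately show "ys!l \<in> M'" unfolding M'_def by blast
    qed
    have vp: "valid M' (take j xs) (take j ys)"
      using valid_prefix[OF v _ IT' ysM'] j by simp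
    have xjS: "xs!j \<in> (\<Union>i\<in>SS (take j ys). W i)" using vj by blast
    have xjn: "\<forall>d\<in>set (take j xs) \<union> set (take j ys). \<not> E (xs!j) d"
    proof
      fix d assume "d \<in> set (take j xs) \<union> set (take j ys)"
      then obtain l where "l < j" "d = xs!l \<or> d = ys!l"
        using j len by (auto simp: in_set_conv_nth)
      then show "\<not> E (xs!j) d" using vj by blast
    qed
    have vecle: "\<forall>l<length (vec M' (take j xs)). vec M' (take j xs) ! l \<le> vec M xs ! l"
      using le j len by (simp add: vec_def)
    show ?thesis
    proof (cases "{u\<in>M'. E (xs!j) u} = {}")
      case False
      then obtain y' where y': "y' \<in> M'" "E (xs!j) y'" by blast
      have v2: "valid M' (take j xs @ [xs!j]) (take j ys @ [y'])"
        by (rule valid_snoc[OF vp y' xjS xjn])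
      have "pdom (vec M' (take j xs @ [xs!j])) (vec M xs)"
        unfolding pdom_def
      proof (rule exI[of _ j], intro conjI allI impI)
        show "j < length (vec M' (take j xs @ [xs ! j]))" using j len by (simp add: vec_def)
        show "j < length (vec M xs)" using j len by (simp add: vec_def)
        fix l assume "l < j"
        then show "vec M' (take j xs @ [xs ! j]) ! l \<le> vec M xs ! l"
          using le j len by (simp add: vec_def nth_append)
      next
        show "vec M' (take j xs @ [xs ! j]) ! j < vec M xs ! j"
          using ltj j len by (simp add: vec_def nth_append)
      qed
      then show ?thesis using v2 by blast
    next
      case True
      then have nM': "\<forall>u\<in>M'. \<not> E (xs!j) u" by blast
      have "length (take j ys) < length ys" using j by simp
      from less.hyps[OF this vp xjS xjn nM']
      show ?thesis
      proof
        assume "\<exists>M2 xs2 ys2. valid M2 xs2 ys2 \<and> pdom (vec M2 xs2) (vec M' (take j xs))"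
        then obtain M2 xs2 ys2 where "valid M2 xs2 ys2" "pdom (vec M2 xs2) (vec M' (take j xs))" by blast
        moreover have "pdom (vec M2 xs2) (vec M xs)"
          by (rule pdom_mono[OF \<open>pdom (vec M2 xs2) (vec M' (take j xs))\<close> _ vecle])
             (use j len in \<open>simp add: vec_def\<close>)
        ultimately show ?thesis by blast
      qed blast
    qed
  qed
qed

end

context hx begin

definition pad :: "'a set \<Rightarrow> 'a list \<Rightarrow> nat list" where
  "pad M xs = vec M xs @ replicate (card (insert a I0) - length xs) (card (\<Union>i\<in>insert a I0. W i) + 1)"

lemma vec_bound:
  assumes v: "valid M xs ys" and l: "l < length xs"
  shows "vec M xs ! l < card (\<Union>i\<in>insert a I0. W i) + 1"
proof -
  have IT: "indep_transversal E W I0 M" using v valid_def by blast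
  have "card {u\<in>M. E (xs!l) u} \<le> card M" using IT_fin[OF IT] by (intro card_mono) auto
  also have "\<dots> \<le> card (\<Union>i\<in>insert a I0. W i)" using IT_sub[OF IT] fin_full by (rule card_mono[rotated])
  finally show ?thesis using l by (simp add: vec_def)
qed

lemma len_pad: "valid M xs ys \<Longrightarrow> length (pad M xs) = card (insert a I0)"
  using card_bound(2)[of M xs ys] unfolding valid_def pad_def vec_def by simp

lemma step:
  assumes v: "valid M xs ys"
  shows "(\<exists>T. indep_transversal E W (insert a I0) T) \<or>
         (\<exists>M2 xs2 ys2. valid M2 xs2 ys2 \<and> (pad M2 xs2, pad M xs) \<in> lex less_than)"
proof -
  have len: "length xs = length ys" using v valid_def by blast
  obtain z where zS: "z \<in> (\<Union>j\<in>SS ys. W j)" and nz: "\<forall>d\<in>set xs \<union> set ys. \<not> E z d"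
  proof -
    have ne: "SS ys \<noteq> {}" by (simp add: SS_def)
    have fD: "finite (set xs \<union> set ys)" by simp
    show ?thesis using C[OF SS_sub ne fD card_bound(1)[OF v]] that by blast
  qed
  show ?thesis
  proof (cases "\<exists>y\<in>M. E z y")
    case True
    then obtain y where y: "y \<in> M" "E z y" by blast
    have v2: "valid M (xs@[z]) (ys@[y])" by (rule valid_snoc[OF v y zS nz])
    have tl: "length xs < card (insert a I0)" using card_bound(2)[OF v2] len by simp
    have "pdom (pad M (xs@[z])) (pad M xs)"
      unfolding pdom_def
    proof (rule exI[of _ "length xs"], intro conjI allI impI)
      show "length xs < length (pad M (xs @ [z]))" using len_pad[OF v2] tl by simp
      show "length xs < length (pad M xs)" using len_pad[OF v] tl by simp
      fix l assume "l < length xs"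
      then show "pad M (xs @ [z]) ! l \<le> pad M xs ! l" by (simp add: pad_def vec_def nth_append)
    next
      have "pad M (xs @ [z]) ! length xs = vec M (xs@[z]) ! length xs"
        by (simp add: pad_def vec_def nth_append)
      also have "\<dots> < card (\<Union>i\<in>insert a I0. W i) + 1" using vec_bound[OF v2] by simp
      also have "\<dots> = pad M xs ! length xs" using tl by (simp add: pad_def vec_def nth_append)
      finally show "pad M (xs @ [z]) ! length xs < pad M xs ! length xs" .
    qed
    then have "(pad M (xs@[z]), pad M xs) \<in> lex less_than"
      using pdom_lex len_pad[OF v2] len_pad[OF v] by simp
    then show ?thesis using v2 by blast
  next
    case False
    then have nM: "\<forall>y\<in>M. \<not> E z y" by blast
    from R[OF v zS nz nM] show ?thesis
    proof
      assume "\<exists>M2 xs2 ys2. valid M2 xs2 ys2 \<and> pdom (vec M2 xs2) (vec M xs)"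
      then obtain M2 xs2 ys2 where v2: "valid M2 xs2 ys2" and p: "pdom (vec M2 xs2) (vec M xs)" by blast
      have "pdom (pad M2 xs2) (pad M xs)" unfolding pad_def by (rule pdom_append[OF p])
      then have "(pad M2 xs2, pad M xs) \<in> lex less_than"
        using pdom_lex len_pad[OF v2] len_pad[OF v] by simp
      then show ?thesis using v2 by blast
    qed blast
  qed
qed

lemma final: "valid M xs ys \<Longrightarrow> \<exists>T. indep_transversal E W (insert a I0) T"
proof -
  have wf: "wf (inv_image (lex less_than) (\<lambda>(M, xs, ys). pad M xs))"
    by (intro wf_inv_image wf_lex wf_less_than)
  have "\<forall>M xs ys. s = (M, xs, ys) \<longrightarrow> valid M xs ys \<longrightarrow> (\<exists>T. indep_transversal E W (insert a I0) T)" for s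
  proof (induction s rule: wf_induct[OF wf])
    case (1 s)
    show ?case
    proof (intro allI impI)
      fix M xs ys assume s: "s = (M, xs, ys)" and v: "valid M xs ys"
      from step[OF v] show "\<exists>T. indep_transversal E W (insert a I0) T"
      proof
        assume "\<exists>M2 xs2 ys2. valid M2 xs2 ys2 \<and> (pad M2 xs2, pad M xs) \<in> lex less_than"
        then obtain M2 xs2 ys2 where "valid M2 xs2 ys2" "(pad M2 xs2, pad M xs) \<in> lex less_than" by blast
        then have "((M2, xs2, ys2), s) \<in> inv_image (lex less_than) (\<lambda>(M, xs, ys). pad M xs)"
          using s by simp
        from 1[rule_format, OF this, of M2 xs2 ys2] \<open>valid M2 xs2 ys2\<close>
        show ?thesis by blast
      qed
    qed
  qed
  then show "valid M xs ys \<Longrightarrow> \<exists>T. indep_transversal E W (insert a I0) T" by blast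
qed

lemma augment: "indep_transversal E W I0 M \<Longrightarrow> \<exists>T. indep_transversal E W (insert a I0) T"
  by (rule final[of M "[]" "[]"]) (simp add: valid_def)

end

theorem haxell:
  fixes E :: "'a \<Rightarrow> 'a \<Rightarrow> bool" and W :: "nat \<Rightarrow> 'a set" and I :: "nat set"
  assumes sym: "\<And>u v. E u v \<Longrightarrow> E v u" and irr: "\<And>v. \<not> E v v"
    and "finite I"
  shows "(\<forall>i\<in>I. finite (W i)) \<longrightarrow> (\<forall>i\<in>I. \<forall>j\<in>I. i \<noteq> j \<longrightarrow> W i \<inter> W j = {}) \<longrightarrow>
    (\<forall>S D. S \<subseteq> I \<longrightarrow> S \<noteq> {} \<longrightarrow> finite D \<longrightarrow> card D + 2 \<le> 2 * card S \<longrightarrow>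
       (\<exists>x\<in>(\<Union>i\<in>S. W i). \<forall>d\<in>D. \<not> E x d)) \<longrightarrow> (\<exists>T. indep_transversal E W I T)"
  using \<open>finite I\<close>
proof (induction I rule: finite_induct)
  case empty
  show ?case by (intro impI exI[of _ "{}"]) (simp add: indep_transversal_def transversal_def independent_def)
next
  case (insert a F)
  show ?case
  proof (intro impI)
    assume f: "\<forall>i\<in>insert a F. finite (W i)"
      and d: "\<forall>i\<in>insert a F. \<forall>j\<in>insert a F. i \<noteq> j \<longrightarrow> W i \<inter> W j = {}"
      and c: "\<forall>S D. S \<subseteq> insert a F \<longrightarrow> S \<noteq> {} \<longrightarrow> finite D \<longrightarrow> card D + 2 \<le> 2 * card S \<longrightarrow>
       (\<exists>x\<in>(\<Union>i\<in>S. W i). \<forall>d\<in>D. \<not> E x d)"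
    have d': "\<And>i j. i \<in> insert a F \<Longrightarrow> j \<in> insert a F \<Longrightarrow> i \<noteq> j \<Longrightarrow> W i \<inter> W j = {}"
      using d by blast
    have c': "\<And>S D. S \<subseteq> insert a F \<Longrightarrow> S \<noteq> {} \<Longrightarrow> finite D \<Longrightarrow> card D + 2 \<le> 2 * card S
              \<Longrightarrow> \<exists>x\<in>(\<Union>i\<in>S. W i). \<forall>d\<in>D. \<not> E x d"
      using c by blast
    interpret hx E W F a
    proof
      show "\<And>u v. E u v \<Longrightarrow> E v u" by (rule sym)
      show "\<And>v. \<not> E v v" by (rule irr)
      show "finite F" by (rule insert.hyps(1))
      show "a \<notin> F" by (rule insert.hyps(2))
      show "\<And>i. i \<in> insert a F \<Longrightarrow> finite (W i)" using f by blast
    qed (fact d', fact c')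
    have f2: "\<forall>i\<in>F. finite (W i)" using f by simp
    have d2: "\<forall>i\<in>F. \<forall>j\<in>F. i \<noteq> j \<longrightarrow> W i \<inter> W j = {}" using d by simp
    have c2: "\<forall>S D. S \<subseteq> F \<longrightarrow> S \<noteq> {} \<longrightarrow> finite D \<longrightarrow> card D + 2 \<le> 2 * card S \<longrightarrow>
       (\<exists>x\<in>(\<Union>i\<in>S. W i). \<forall>d\<in>D. \<not> E x d)"
    proof (intro allI impI)
      fix S :: "nat set" and D :: "'a set" assume "S \<subseteq> F" "S \<noteq> {}" "finite D" "card D + 2 \<le> 2 * card S"
      moreover have "S \<subseteq> insert a F" using \<open>S \<subseteq> F\<close> by blast
      ultimately show "\<exists>x\<in>(\<Union>i\<in>S. W i). \<forall>d\<in>D. \<not> E x d" using c' by blast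
    qed
    obtain M where "indep_transversal E W F M" using insert.IH f2 d2 c2 by blast
    then show "\<exists>T. indep_transversal E W (insert a F) T" by (rule augment)
  qed
qed

theorem lemma2p1:
  fixes V :: "'a set" and E :: "'a \<Rightarrow> 'a \<Rightarrow> bool" and P :: "nat \<Rightarrow> 'a set" and k :: nat
  assumes "graph V E"
    and "k \<ge> 1"
    and "is_partition V P k"
    and "\<forall>i\<in>{1..<k}. card (P i) > 2 * max_degree V E"
    and "v \<in> P k" and "v' \<in> P k"
  shows "\<exists>T. indep_transversal E P {1..<k} T
           \<and> indep_transversal E P {1..k} (T \<union> {v})
           \<and> indep_transversal E P {1..k} (T \<union> {v'})"
proof -
  note g = assms(1)[unfolded graph_def]
  have finV: "finite V" using g by blast
  have inV: "\<And>u w. E u w \<Longrightarrow> u \<in> V \<and> w \<in> V" using g by blast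
  have sym: "\<And>u w. E u w \<Longrightarrow> E w u" using g by blast
  have irr: "\<And>u. \<not> E u u" using g by blast
  note part = assms(3)[unfolded is_partition_def]
  have PV: "\<And>i. i \<in> {1..k} \<Longrightarrow> P i \<subseteq> V" using part by blast
  have Pdisj: "\<And>i j. i \<in> {1..k} \<Longrightarrow> j \<in> {1..k} \<Longrightarrow> i \<noteq> j \<Longrightarrow> P i \<inter> P j = {}" using part by blast
  define \<Delta> where "\<Delta> = max_degree V E"
  define N where "N = (\<lambda>d. {u\<in>V. E d u})"
  have degN: "\<And>d. card (N d) \<le> \<Delta>"
  proof -
    fix d
    show "card (N d) \<le> \<Delta>"
    proof (cases "d \<in> V")
      case True
      have "card (N d) = degree V E d" unfolding N_def degree_def by simp
      also have "\<dots> \<le> Max (insert 0 (degree V E ` V))" using True finV by (intro Max_ge) auto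
      finally show ?thesis unfolding \<Delta>_def max_degree_def .
    next
      case False
      then have "N d = {}" unfolding N_def using inV by blast
      then show ?thesis by simp
    qed
  qed
  define X where "X = N v \<union> N v'"
  have cX: "card X \<le> 2 * \<Delta>"
    unfolding X_def using card_Un_le[of "N v" "N v'"] degN[of v] degN[of v'] by simp
  define W where "W = (\<lambda>i. P i - X)"
  have k1: "\<And>i. i \<in> {1..<k} \<Longrightarrow> i \<in> {1..k}" by auto
  have hx: "(\<forall>i\<in>{1..<k}. finite (W i)) \<longrightarrow> (\<forall>i\<in>{1..<k}. \<forall>j\<in>{1..<k}. i \<noteq> j \<longrightarrow> W i \<inter> W j = {}) \<longrightarrow>
    (\<forall>S D. S \<subseteq> {1..<k} \<longrightarrow> S \<noteq> {} \<longrightarrow> finite D \<longrightarrow> card D + 2 \<le> 2 * card S \<longrightarrow>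
       (\<exists>x\<in>(\<Union>i\<in>S. W i). \<forall>d\<in>D. \<not> E x d)) \<longrightarrow> (\<exists>T. indep_transversal E W {1..<k} T)"
    by (rule haxell[OF sym irr finite_atLeastLessThan])
  have PVk: "\<And>i. i \<in> {1..<k} \<Longrightarrow> P i \<subseteq> V" using PV k1 by blast
  have finP: "\<And>i. i \<in> {1..<k} \<Longrightarrow> finite (P i)" using PVk finV by (meson finite_subset)
  have f1: "\<forall>i\<in>{1..<k}. finite (W i)" unfolding W_def using finP by blast
  have Pdisj': "\<And>i j. i \<in> {1..<k} \<Longrightarrow> j \<in> {1..<k} \<Longrightarrow> i \<noteq> j \<Longrightarrow> P i \<inter> P j = {}"
    using Pdisj k1 by meson
  have f2: "\<forall>i\<in>{1..<k}. \<forall>j\<in>{1..<k}. i \<noteq> j \<longrightarrow> W i \<inter> W j = {}"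
  proof (intro ballI impI)
    fix i j assume "i \<in> {1..<k}" "j \<in> {1..<k}" "i \<noteq> j"
    then have "P i \<inter> P j = {}" by (rule Pdisj')
    then show "W i \<inter> W j = {}" unfolding W_def by blast
  qed
  have f3: "\<forall>S D. S \<subseteq> {1..<k} \<longrightarrow> S \<noteq> {} \<longrightarrow> finite D \<longrightarrow> card D + 2 \<le> 2 * card S \<longrightarrow>
       (\<exists>x\<in>(\<Union>i\<in>S. W i). \<forall>d\<in>D. \<not> E x d)"
  proof (intro allI impI)
    fix S :: "nat set" and D :: "'a set"
    assume S: "S \<subseteq> {1..<k}" "S \<noteq> {}" and D: "finite D" "card D + 2 \<le> 2 * card S"
    have finS: "finite S" using S(1) finite_subset by blast
    define U where "U = (\<Union>i\<in>S. P i)"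
    have WU: "(\<Union>i\<in>S. W i) = U - X" unfolding U_def W_def by blast
    show "\<exists>x\<in>(\<Union>i\<in>S. W i). \<forall>d\<in>D. \<not> E x d"
    proof (rule ccontr)
      assume "\<not> ?thesis"
      then have nn: "\<forall>x\<in>U - X. \<exists>d\<in>D. E x d" unfolding WU by blast
      have UV: "U \<subseteq> V" unfolding U_def using PVk S(1) by blast
      have cov: "U - X \<subseteq> (\<Union>d\<in>D. N d)"
      proof
        fix x assume x: "x \<in> U - X"
        then obtain d where d: "d \<in> D" "E x d" using nn by blast
        have "x \<in> N d" unfolding N_def using x UV sym[OF d(2)] by blast
        then show "x \<in> (\<Union>d\<in>D. N d)" using d(1) by blast
      qed
      have finN: "finite (\<Union>d\<in>D. N d)" using D(1) finV unfolding N_def by auto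
      have "card (U - X) \<le> card (\<Union>d\<in>D. N d)" by (rule card_mono[OF finN cov])
      also have "\<dots> \<le> (\<Sum>d\<in>D. card (N d))" by (rule card_UN_le[OF D(1)])
      also have "\<dots> \<le> card D * \<Delta>" using sum_bounded_above[of D "\<lambda>d. card (N d)" \<Delta>] degN by simp
      finally have h0: "card (U - X) \<le> card D * \<Delta>" .
      have finU: "finite U" using UV finV finite_subset by blast
      have "card U = (\<Sum>i\<in>S. card (P i))" unfolding U_def
      proof (rule card_UN_disjoint[OF finS])
        show "\<forall>i\<in>S. finite (P i)" using finP S(1) by blast
        show "\<forall>i\<in>S. \<forall>j\<in>S. i \<noteq> j \<longrightarrow> P i \<inter> P j = {}"
        proof (intro ballI impI)
          fix i j assume "i \<in> S" "j \<in> S" "i \<noteq> j"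
          then show "P i \<inter> P j = {}" using Pdisj' S(1) by (meson subsetD)
        qed
      qed
      moreover have "card S * (2 * \<Delta> + 1) \<le> (\<Sum>i\<in>S. card (P i))"
        using sum_bounded_below[of S "2 * \<Delta> + 1" "\<lambda>i. card (P i)"] assms(4) S(1) \<Delta>_def
        by (simp add: Suc_le_eq subset_iff)
      moreover have "card U \<le> card (U - X) + card X"
      proof -
        have "card U \<le> card ((U - X) \<union> X)" using finU finV X_def N_def by (intro card_mono) auto
        then show ?thesis using card_Un_le[of "U - X" X] by simp
      qed
      ultimately have h1: "card S * (2 * \<Delta> + 1) \<le> card D * \<Delta> + 2 * \<Delta>" using h0 cX by linarith
      have h2: "(card D + 2) * \<Delta> \<le> (2 * card S) * \<Delta>" using D(2) by (rule mult_le_mono1)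
      have "card S > 0" using S finS by (simp add: card_gt_0_iff)
      then show False using h1 h2 by (simp add: algebra_simps)
    qed
  qed
  obtain T where T: "indep_transversal E W {1..<k} T" using hx f1 f2 f3 by blast
  have TW: "T \<subseteq> (\<Union>i\<in>{1..<k}. W i)" "\<forall>i\<in>{1..<k}. card (T \<inter> W i) = 1" "independent E T"
    using T unfolding indep_transversal_def transversal_def by auto
  have TP: "\<And>i. i \<in> {1..k} \<Longrightarrow> T \<inter> P i = T \<inter> W i"
  proof -
    fix i assume i: "i \<in> {1..k}"
    show "T \<inter> P i = T \<inter> W i"
    proof
      show "T \<inter> W i \<subseteq> T \<inter> P i" unfolding W_def by blast
      show "T \<inter> P i \<subseteq> T \<inter> W i"
      proof
        fix x assume x: "x \<in> T \<inter> P i"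
        then obtain j where j: "j \<in> {1..<k}" "x \<in> W j" using TW(1) by blast
        then have "x \<in> P j" unfolding W_def by blast
        then have "i = j" using Pdisj[OF i k1[OF j(1)]] x by blast
        then show "x \<in> T \<inter> W i" using x j by blast
      qed
    qed
  qed
  have TPk: "T \<inter> P k = {}"
  proof -
    have "T \<inter> W k = {}"
    proof
      show "T \<inter> W k \<subseteq> {}"
      proof
        fix x assume x: "x \<in> T \<inter> W k"
        then obtain j where j: "j \<in> {1..<k}" "x \<in> W j" using TW(1) by blast
        then have "x \<in> P j" "x \<in> P k" using x unfolding W_def by blast+
        moreover have "j \<noteq> k" using j by simp
        ultimately show "x \<in> {}" using Pdisj[OF k1[OF j(1)], of k] assms(2) by auto
      qed
    qed simp
    then show ?thesis using TP[of k] assms(2) by simp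
  qed
  have TX: "T \<inter> X = {}" using TW(1) unfolding W_def by blast
  have TsubP: "T \<subseteq> (\<Union>i\<in>{1..<k}. P i)"
  proof
    fix x assume "x \<in> T"
    then obtain j where "j \<in> {1..<k}" "x \<in> W j" using TW(1) by blast
    then show "x \<in> (\<Union>i\<in>{1..<k}. P i)" unfolding W_def by blast
  qed
  have TsubP': "T \<subseteq> (\<Union>i\<in>{1..k}. P i)" using TsubP by fastforce
  have TV: "T \<subseteq> V" using TsubP PVk by blast
  have IT1: "indep_transversal E P {1..<k} T"
  proof -
    have "\<forall>i\<in>{1..<k}. card (T \<inter> P i) = 1" using TW(2) TP k1 by simp
    then show ?thesis using TsubP TW(3) unfolding indep_transversal_def transversal_def by blast
  qed
  have gen: "indep_transversal E P {1..k} (T \<union> {w})" if w: "w \<in> P k" "\<forall>u\<in>T. \<not> E w u" for w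
  proof -
    have tr: "transversal W' {1..k} (T \<union> {w})" if "W' = P" for W'
      unfolding transversal_def that
    proof (intro conjI ballI)
      show "T \<union> {w} \<subseteq> (\<Union>i\<in>{1..k}. P i)" using TsubP' w(1) assms(2) by auto
      fix i assume i: "i \<in> {1..k}"
      show "card ((T \<union> {w}) \<inter> P i) = 1"
      proof (cases "i = k")
        case True
        then have "(T \<union> {w}) \<inter> P i = {w}" using TPk w(1) by blast
        then show ?thesis by simp
      next
        case False
        then have "i \<in> {1..<k}" using i by simp
        moreover have "w \<notin> P i" using Pdisj[OF i, of k] False assms(2) w(1) by auto
        ultimately show ?thesis using TW(2) TP[OF i] by (simp add: Int_Un_distrib2 Int_insert_left)
      qed
    qed
    have "independent E (T \<union> {w})"
      using TW(3) w(2) irr sym unfolding independent_def by blast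
    then show ?thesis using tr indep_transversal_def by blast
  qed
  have nv: "\<forall>u\<in>T. \<not> E v u" and nv': "\<forall>u\<in>T. \<not> E v' u"
    using TX TV unfolding X_def N_def by blast+
  show ?thesis using IT1 gen[OF assms(5) nv] gen[OF assms(6) nv'] by blast
qed

end
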